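(* Let $x_{00},x_{10},x_{11},x_{01}\in\mathbb{RP}^3$ be a planar quadrilateral with Laplace points $y^1$ (intersection of lines $x_{00}x_{10}$ and $x_{01}x_{11}$) and $y^2$ (intersection of lines $x_{00}x_{01}$ and $x_{10}x_{11}$), and let $N\ge2$ be an integer. Let $p_0,p_1,q_0,q_1:\{0,\dots,N\}\to\mathbb{RP}^3$ be polylines with $p_j(iN)=q_i(jN)=x_{ij}$ for $i,j\in\{0,1\}$, such that $p_0(k),p_1(k),y^2$ are collinear for all $k$ and $q_0(\ell),q_1(\ell),y^1$ are collinear for all $\ell$. Then there exists a unique multi-Q-net $f:\{0,\dots,N\}^2\to\mathbb{RP}^3$ with $f(k,jN)=p_j(k)$ for all $k\in\{0,\dots,N\}$, $j\in\{0,1\}$, and $f(iN,\ell)=q_i(\ell)$ for all $\ell\in\{0,\dots,N\}$, $i\in\{0,1\}$.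
   Context: A multi-Q-net on $\{0,\dots,N\}^2$ is a map $f$ to $\mathbb{RP}^3$ such that for all $i_0\ne i_1$, $j_0\ne j_1$ the points $f(i_0,j_0),f(i_0,j_1),f(i_1,j_1),f(i_1,j_0)$ are coplanar. Data are assumed in general position. *)

theory Defs
  imports "HOL-Analysis.Analysis"
begin

typedef rp3 = "{L :: (real^4) set. \<exists>v. v \<noteq> 0 \<and> L = span {v}}"
  morphisms ppoint_space Abs_rp3
  by (rule exI[of _ "span {axis 1 (1::real)}"], rule CollectI, rule exI[of _ "axis 1 (1::real)"]) (simp add: axis_eq_0_iff)

definition psp :: "rp3 set \<Rightarrow> (real^4) set" where
  "psp S = span (\<Union> (ppoint_space ` S))"

definition coplanar4 :: "rp3 \<Rightarrow> rp3 \<Rightarrow> rp3 \<Rightarrow> rp3 \<Rightarrow> bool" where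
  "coplanar4 a b c d \<longleftrightarrow> dim (psp {a, b, c, d}) \<le> 3"

definition collinear3 :: "rp3 \<Rightarrow> rp3 \<Rightarrow> rp3 \<Rightarrow> bool" where
  "collinear3 a b c \<longleftrightarrow> dim (psp {a, b, c}) \<le> 2"

definition on_line :: "rp3 \<Rightarrow> rp3 \<Rightarrow> rp3 \<Rightarrow> bool" where
  "on_line y a b \<longleftrightarrow> ppoint_space y \<subseteq> psp {a, b}"

definition multi_Q_net :: "nat \<Rightarrow> (nat \<Rightarrow> nat \<Rightarrow> rp3) \<Rightarrow> bool" where
  "multi_Q_net N f \<longleftrightarrow>
     (\<forall>i0 i1 j0 j1. i0 \<le> N \<and> i1 \<le> N \<and> j0 \<le> N \<and> j1 \<le> N \<and> i0 \<noteq> i1 \<and> j0 \<noteq> j1 \<longrightarrow>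
        coplanar4 (f i0 j0) (f i0 j1) (f i1 j1) (f i1 j0))"

definition quad_nondegenerate :: "rp3 \<Rightarrow> rp3 \<Rightarrow> rp3 \<Rightarrow> rp3 \<Rightarrow> bool" where
  "quad_nondegenerate x00 x10 x11 x01 \<longleftrightarrow>
     \<not> collinear3 x00 x10 x11 \<and> \<not> collinear3 x10 x11 x01 \<and>
     \<not> collinear3 x11 x01 x00 \<and> \<not> collinear3 x01 x00 x10"

definition gen_pos_data ::
  "nat \<Rightarrow> rp3 \<Rightarrow> rp3 \<Rightarrow> rp3 \<Rightarrow> rp3 \<Rightarrow> (nat \<Rightarrow> rp3) \<Rightarrow> (nat \<Rightarrow> rp3) \<Rightarrow> (nat \<Rightarrow> rp3) \<Rightarrow> (nat \<Rightarrow> rp3) \<Rightarrow> bool"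
  where
  "gen_pos_data N x00 x10 x11 x01 p0 p1 q0 q1 \<longleftrightarrow>
     quad_nondegenerate x00 x10 x11 x01 \<and>
     (\<forall>k l. 0 < k \<and> k < N \<and> 0 < l \<and> l < N \<longrightarrow>
        dim (psp {p0 k, x00, q0 l}) = 3 \<and>
        dim (psp {p1 k, x01, q0 l}) = 3 \<and>
        dim (psp {p0 k, x10, q1 l}) = 3 \<and>
        dim (psp {p1 k, x11, q1 l}) = 3 \<and>
        dim (psp {p0 k, x00, q0 l} \<inter> psp {p1 k, x01, q0 l} \<inter>
             psp {p0 k, x10, q1 l} \<inter> psp {p1 k, x11, q1 l}) \<le> 1)"

end

theory Submission
  imports Defs
begin

definition rep :: "rp3 \<Rightarrow> real^4" where
  "rep x = (SOME v. v \<noteq> 0 \<and> ppoint_space x = span {v})"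

lemma rep: "rep x \<noteq> 0" "ppoint_space x = span {rep x}"
proof -
  have "\<exists>v. v \<noteq> 0 \<and> ppoint_space x = span {v}" using ppoint_space[of x] by auto
  then have "rep x \<noteq> 0 \<and> ppoint_space x = span {rep x}"
    unfolding rep_def by (rule someI_ex)
  then show "rep x \<noteq> 0" "ppoint_space x = span {rep x}" by auto
qed

lemma psp_rep: "psp S = span (rep ` S)"
  unfolding psp_def span_eq
proof (intro conjI subsetI)
  fix v assume "v \<in> \<Union> (ppoint_space ` S)"
  then obtain x where "x \<in> S" "v \<in> span {rep x}" using rep(2) by auto
  moreover have "span {rep x} \<subseteq> span (rep ` S)" using \<open>x \<in> S\<close> by (intro span_mono) auto
  ultimately show "v \<in> span (rep ` S)" by auto
next
  fix v assume "v \<in> rep ` S"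
  then obtain x where "x \<in> S" "v = rep x" by auto
  then have "v \<in> ppoint_space x" using rep(2)[of x] by (simp add: span_base)
  then show "v \<in> span (\<Union> (ppoint_space ` S))" using \<open>x \<in> S\<close> by (intro span_base) auto
qed

lemma psp3: "psp {a,b,c} = span {rep a, rep b, rep c}" by (simp add: psp_rep)
lemma psp4: "psp {a,b,c,d} = span {rep a, rep b, rep c, rep d}" by (simp add: psp_rep)

lemma line_eq: assumes "v \<noteq> 0" "v \<in> ppoint_space x" shows "ppoint_space x = span {v}"
proof -
  from assms(2) obtain k where k: "v = k *\<^sub>R rep x" using rep(2)[of x] by (auto simp: span_singleton)
  with assms have "k \<noteq> 0" by auto
  have "rep x = (1/k) *\<^sub>R v" using k \<open>k \<noteq> 0\<close> by simp
  moreover have "(1/k) *\<^sub>R v \<in> span {v}" by (intro span_scale span_base) auto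
  ultimately have "rep x \<in> span {v}" by simp
  moreover have "v \<in> span {rep x}" using assms rep(2) by simp
  ultimately have "span {rep x} = span {v}" unfolding span_eq by simp
  then show ?thesis using rep(2)[of x] by simp
qed

lemma pt_eq: assumes "v \<noteq> 0" "v \<in> ppoint_space x" "v \<in> ppoint_space y" shows "x = y"
  using line_eq[OF assms(1,2)] line_eq[OF assms(1,3)] ppoint_space_inject by metis

definition pt :: "real^4 \<Rightarrow> rp3" where "pt v = Abs_rp3 (span {v})"

lemma pt: "v \<noteq> 0 \<Longrightarrow> ppoint_space (pt v) = span {v}"
  unfolding pt_def by (rule Abs_rp3_inverse) auto

lemma in_line_rep: "rep x \<in> ppoint_space x"
  using rep(2)[of x] by (simp add: span_base)

lemma scale_in_line: "v \<in> ppoint_space x \<Longrightarrow> c *\<^sub>R v \<in> ppoint_space x"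
  using rep(2)[of x] by (simp add: span_scale)

lemma zero_in_line: "0 \<in> ppoint_space x"
  using rep(2)[of x] by (simp add: span_zero)

lemma distinct_indep: assumes "x \<noteq> y" shows "independent {rep x, rep y}" "rep x \<noteq> rep y"
proof -
  have "rep y \<notin> span {rep x}"
  proof
    assume "rep y \<in> span {rep x}"
    then have "rep y \<in> ppoint_space x" using rep(2) by simp
    then show False using pt_eq[OF rep(1)[of y] _ in_line_rep[of y], of x] assms by simp
  qed
  moreover have "independent {rep x}" using rep(1)[of x] by (simp add: independent_insert span_empty)
  ultimately have "independent (insert (rep y) {rep x})" by (rule independent_insertI)
  then show "independent {rep x, rep y}" by (simp add: insert_commute)
  show "rep x \<noteq> rep y" using \<open>rep y \<notin> span {rep x}\<close> by (auto simp: span_base)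
qed

lemma dim_le3: "dim (span {a,b,c::real^4}) \<le> 3"
proof -
  have "dim {a,b,c} \<le> card {a,b,c}" by (rule dim_le_card) (auto intro: span_base)
  moreover have "card {a,b,c} \<le> 3" using card_length[of "[a,b,c]"] by simp
  ultimately show ?thesis by simp
qed

lemma dim2_of_mem: assumes "a \<in> span {b, c::real^4}" shows "dim (span {a,b,c}) \<le> 2"
proof -
  have "span {a,b,c} = span {b,c}" using span_redundant[OF assms] by simp
  then have "dim (span {a,b,c}) = dim {b,c}" by (metis dim_span)
  also have "\<dots> \<le> card {b,c}" by (rule dim_le_card) (auto intro: span_base)
  also have "\<dots> \<le> 2" using card_length[of "[b,c]"] by simp
  finally show ?thesis .
qed

lemma span2_E: assumes "v \<in> span {a, b::real^4}" obtains s t where "v = s *\<^sub>R a + t *\<^sub>R b"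
proof -
  from assms obtain s where "v - s *\<^sub>R a \<in> span {b}" by (auto simp: span_breakdown_eq)
  then obtain t where "v - s *\<^sub>R a = t *\<^sub>R b" by (auto simp: span_singleton)
  then have "v = s *\<^sub>R a + t *\<^sub>R b" by (simp add: algebra_simps)
  then show ?thesis by (rule that)
qed

lemma span2_I: "s *\<^sub>R a + t *\<^sub>R b \<in> span {a, b::real^4}"
  by (intro span_add span_scale span_base) auto

lemma solve_lin: assumes "x \<noteq> 0" "x *\<^sub>R a + w = (0::real^4)" shows "a = (-1/x) *\<^sub>R w"
proof -
  have "x *\<^sub>R a = - w" using assms(2) by (simp add: eq_neg_iff_add_eq_0)
  then have "(1/x) *\<^sub>R (x *\<^sub>R a) = (1/x) *\<^sub>R (- w)" by simp
  then show ?thesis using assms(1) by simp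
qed

lemma indep3: assumes nd: "\<not> dim (span {a,b,c::real^4}) \<le> 2"
  and rel: "x *\<^sub>R a + y *\<^sub>R b + z *\<^sub>R c = 0"
  shows "x = 0" "y = 0" "z = 0"
proof -
  show "x = 0"
  proof (rule ccontr)
    assume "x \<noteq> 0"
    have "a = (-1/x) *\<^sub>R (y *\<^sub>R b + z *\<^sub>R c)"
      by (rule solve_lin[OF \<open>x \<noteq> 0\<close>]) (use rel in \<open>simp add: algebra_simps\<close>)
    then have "a \<in> span {b,c}" using span_scale[OF span2_I] by metis
    then show False using dim2_of_mem nd by blast
  qed
  show "y = 0"
  proof (rule ccontr)
    assume "y \<noteq> 0"
    have "b = (-1/y) *\<^sub>R (x *\<^sub>R a + z *\<^sub>R c)"
      by (rule solve_lin[OF \<open>y \<noteq> 0\<close>]) (use rel in \<open>simp add: algebra_simps\<close>)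
    then have "b \<in> span {a,c}" using span_scale[OF span2_I] by metis
    then have "dim (span {b,a,c}) \<le> 2" by (rule dim2_of_mem)
    then show False using nd by (simp add: insert_commute)
  qed
  show "z = 0"
  proof (rule ccontr)
    assume "z \<noteq> 0"
    have "c = (-1/z) *\<^sub>R (x *\<^sub>R a + y *\<^sub>R b)"
      by (rule solve_lin[OF \<open>z \<noteq> 0\<close>]) (use rel in \<open>simp add: algebra_simps\<close>)
    then have "c \<in> span {a,b}" using span_scale[OF span2_I] by metis
    then have "dim (span {c,a,b}) \<le> 2" by (rule dim2_of_mem)
    then show False using nd by (simp add: insert_commute)
  qed
qed

lemma quad_rel:
  assumes v: "v1 \<in> ppoint_space x1" "v2 \<in> ppoint_space x2" "v3 \<in> ppoint_space x3" "v4 \<in> ppoint_space x4"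
    and rel: "c1 *\<^sub>R v1 + c2 *\<^sub>R v2 + c3 *\<^sub>R v3 + c4 *\<^sub>R v4 = 0"
    and nz: "c1 *\<^sub>R v1 \<noteq> 0"
  shows "dim (span {rep x1, rep x2, rep x3, rep x4}) \<le> 3"
proof -
  let ?S = "span {rep x2, rep x3, rep x4}"
  have c1: "c1 \<noteq> 0" and v1: "v1 \<noteq> 0" using nz by auto
  have m2: "v2 \<in> ?S" using v(2) rep(2)[of x2] span_mono[of "{rep x2}" "{rep x2, rep x3, rep x4}"] by auto
  have m3: "v3 \<in> ?S" using v(3) rep(2)[of x3] span_mono[of "{rep x3}" "{rep x2, rep x3, rep x4}"] by auto
  have m4: "v4 \<in> ?S" using v(4) rep(2)[of x4] span_mono[of "{rep x4}" "{rep x2, rep x3, rep x4}"] by auto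
  have "v1 = (-1/c1) *\<^sub>R (c2 *\<^sub>R v2 + c3 *\<^sub>R v3 + c4 *\<^sub>R v4)"
    by (rule solve_lin[OF c1]) (use rel in \<open>simp add: algebra_simps\<close>)
  moreover have "(-1/c1) *\<^sub>R (c2 *\<^sub>R v2 + c3 *\<^sub>R v3 + c4 *\<^sub>R v4) \<in> ?S"
    using m2 m3 m4 by (intro span_scale span_add) auto
  ultimately have "v1 \<in> ?S" by simp
  then have "span {v1} \<subseteq> ?S" by (simp add: span_minimal subspace_span)
  moreover have "rep x1 \<in> span {v1}" using line_eq[OF v1 v(1)] in_line_rep[of x1] by simp
  ultimately have "rep x1 \<in> ?S" by auto
  then have "span {rep x1, rep x2, rep x3, rep x4} = ?S" by (simp add: span_redundant)
  then show ?thesis using dim_le3 by (metis dim_span)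
qed

lemma coplanar_rel:
  assumes v: "v1 \<in> ppoint_space x1" "v2 \<in> ppoint_space x2" "v3 \<in> ppoint_space x3" "v4 \<in> ppoint_space x4"
    and rel: "c1 *\<^sub>R v1 + c2 *\<^sub>R v2 + c3 *\<^sub>R v3 + c4 *\<^sub>R v4 = 0"
    and nz: "c1 *\<^sub>R v1 \<noteq> 0 \<or> c2 *\<^sub>R v2 \<noteq> 0 \<or> c3 *\<^sub>R v3 \<noteq> 0 \<or> c4 *\<^sub>R v4 \<noteq> 0"
  shows "coplanar4 x1 x2 x3 x4"
  unfolding coplanar4_def psp4
  using nz
proof (elim disjE)
  assume "c1 *\<^sub>R v1 \<noteq> 0"
  then show "dim (span {rep x1, rep x2, rep x3, rep x4}) \<le> 3" by (rule quad_rel[OF v rel])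
next
  assume h: "c2 *\<^sub>R v2 \<noteq> 0"
  have "dim (span {rep x2, rep x1, rep x3, rep x4}) \<le> 3"
    by (rule quad_rel[OF v(2,1,3,4) _ h, of c1 c3 c4]) (use rel in \<open>simp add: algebra_simps\<close>)
  then show "dim (span {rep x1, rep x2, rep x3, rep x4}) \<le> 3" by (simp add: insert_commute)
next
  assume h: "c3 *\<^sub>R v3 \<noteq> 0"
  have "dim (span {rep x3, rep x1, rep x2, rep x4}) \<le> 3"
    by (rule quad_rel[OF v(3,1,2,4) _ h, of c1 c2 c4]) (use rel in \<open>simp add: algebra_simps\<close>)
  then show "dim (span {rep x1, rep x2, rep x3, rep x4}) \<le> 3" by (simp add: insert_commute)
next
  assume h: "c4 *\<^sub>R v4 \<noteq> 0"
  have "dim (span {rep x4, rep x1, rep x2, rep x3}) \<le> 3"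
    by (rule quad_rel[OF v(4,1,2,3) _ h, of c1 c2 c3]) (use rel in \<open>simp add: algebra_simps\<close>)
  then show "dim (span {rep x1, rep x2, rep x3, rep x4}) \<le> 3" by (simp add: insert_commute)
qed

lemma coplanar_triv12: "x1 = x2 \<Longrightarrow> coplanar4 x1 x2 x3 x4"
  unfolding coplanar4_def psp4 using dim_le3[of "rep x1" "rep x3" "rep x4"] by simp

lemma coplanar_triv14: "x1 = x4 \<Longrightarrow> coplanar4 x1 x2 x3 x4"
  unfolding coplanar4_def psp4 using dim_le3[of "rep x1" "rep x2" "rep x3"] by (simp add: insert_commute)

lemma in_span2: assumes "dim (span {u, v, w::real^4}) \<le> 2" "independent {u, w}" "u \<noteq> w"
  shows "v \<in> span {u, w}"
proof (rule ccontr)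
  assume nv: "v \<notin> span {u, w}"
  then have "independent (insert v {u,w})" using assms(2) by (rule independent_insertI)
  moreover have "v \<notin> {u, w}" using nv by (auto intro: span_base)
  ultimately have "dim (span {v,u,w}) = card {v,u,w}" "card {v,u,w} = 3" using assms(3)
    by (simp add: dim_span_eq_card_independent del: dim_span, auto)
  then have "dim (span {v,u,w}) = 3" by simp
  then show False using assms(1) by (simp add: insert_commute)
qed

lemma pt_rep: "pt (rep x) = x"
  unfolding pt_def rep(2)[of x, symmetric] by (rule ppoint_space_inverse)

lemma exist_a:
  assumes col: "collinear3 P0 P1 Y" and Yv: "Yv \<in> ppoint_space Y" "Yv \<noteq> 0"
    and nd: "\<not> (P0 = P1 \<and> P0 \<noteq> Y)"
  shows "\<exists>a. a \<in> ppoint_space P0 \<and> a + Yv \<in> ppoint_space P1"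
proof (cases "P0 = Y")
  case True
  then show ?thesis using Yv scale_in_line[of Yv Y "-1"] zero_in_line[of P1] by (intro exI[of _ "- Yv"]) simp
next
  case False
  then have ne: "P0 \<noteq> P1" using nd by auto
  have "dim (span {rep P0, rep P1, rep Y}) \<le> 2" using col by (simp add: collinear3_def psp3)
  then have "rep P1 \<in> span {rep P0, rep Y}" using distinct_indep[OF False] by (intro in_span2) auto
  then obtain s t where st: "rep P1 = s *\<^sub>R rep P0 + t *\<^sub>R rep Y" by (rule span2_E)
  from Yv have "Yv \<in> span {rep Y}" using rep(2) by simp
  then obtain m where m: "Yv = m *\<^sub>R rep Y" by (auto simp: span_singleton)
  with Yv have m0: "m \<noteq> 0" by auto
  have "t \<noteq> 0"
  proof
    assume "t = 0"
    then have "rep P1 \<in> ppoint_space P0" using st scale_in_line[OF in_line_rep] by simp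
    then show False using pt_eq[OF rep(1) _ in_line_rep] ne by metis
  qed
  let ?a = "(s * m / t) *\<^sub>R rep P0"
  have "?a + Yv = (m / t) *\<^sub>R rep P1" using st m \<open>t \<noteq> 0\<close> by (simp add: algebra_simps)
  then have "?a + Yv \<in> ppoint_space P1" using scale_in_line[OF in_line_rep] by simp
  moreover have "?a \<in> ppoint_space P0" using scale_in_line[OF in_line_rep] by simp
  ultimately show ?thesis by blast
qed

lemma mem_line: "v \<in> ppoint_space x \<longleftrightarrow> v \<in> span {rep x}"
  using rep(2) by simp

lemma quad_frame:
  assumes nd: "quad_nondegenerate x00 x10 x11 x01"
    and y1: "on_line y1 x00 x10" "on_line y1 x01 x11"
    and y2: "on_line y2 x00 x01" "on_line y2 x10 x11"
  obtains U Y1 Y2 where "U \<in> ppoint_space x00" "U \<noteq> 0" "Y1 \<in> ppoint_space y1" "Y1 \<noteq> 0"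
    "Y2 \<in> ppoint_space y2" "Y2 \<noteq> 0" "U + Y1 \<in> ppoint_space x10" "U + Y1 \<noteq> 0"
    "U + Y2 \<in> ppoint_space x01" "U + Y2 \<noteq> 0" "U + Y1 + Y2 \<in> ppoint_space x11" "U + Y1 + Y2 \<noteq> 0"
proof -
  define u0 where "u0 = rep x00"
  define u1 where "u1 = rep x10"
  define u2 where "u2 = rep x01"
  define u3 where "u3 = rep x11"
  define w1 where "w1 = rep y1"
  define w2 where "w2 = rep y2"
  have nz: "u0 \<noteq> 0" "u1 \<noteq> 0" "u2 \<noteq> 0" "u3 \<noteq> 0" "w1 \<noteq> 0" "w2 \<noteq> 0"
    unfolding u0_def u1_def u2_def u3_def w1_def w2_def by (simp_all add: rep(1))
  have n1: "\<not> dim (span {u0,u1,u3}) \<le> 2" and n2: "\<not> dim (span {u1,u3,u2}) \<le> 2"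
    and n3: "\<not> dim (span {u3,u2,u0}) \<le> 2" and n4: "\<not> dim (span {u2,u0,u1}) \<le> 2"
    using nd unfolding quad_nondegenerate_def collinear3_def psp3 u0_def u1_def u2_def u3_def by auto
  have w1a: "w1 \<in> span {u0,u1}" using y1(1) in_line_rep[of y1]
    unfolding on_line_def psp_rep u0_def u1_def w1_def by auto
  have w1b: "w1 \<in> span {u2,u3}" using y1(2) in_line_rep[of y1]
    unfolding on_line_def psp_rep u2_def u3_def w1_def by auto
  have w2a: "w2 \<in> span {u0,u2}" using y2(1) in_line_rep[of y2]
    unfolding on_line_def psp_rep u0_def u2_def w2_def by auto
  have w2b: "w2 \<in> span {u1,u3}" using y2(2) in_line_rep[of y2]
    unfolding on_line_def psp_rep u1_def u3_def w2_def by auto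
  obtain al be where w1e: "w1 = al *\<^sub>R u0 + be *\<^sub>R u1" using w1a by (rule span2_E)
  obtain al' be' where w2e: "w2 = al' *\<^sub>R u0 + be' *\<^sub>R u2" using w2a by (rule span2_E)
  have al: "al \<noteq> 0"
  proof
    assume "al = 0"
    then have "be \<noteq> 0" using w1e nz by auto
    have "u1 = (1/be) *\<^sub>R w1" using w1e \<open>al = 0\<close> \<open>be \<noteq> 0\<close> by simp
    then have "u1 \<in> span {u2, u3}" using w1b by (simp add: span_scale)
    then have "dim (span {u1,u2,u3}) \<le> 2" by (rule dim2_of_mem)
    then show False using n2 by (simp add: insert_commute)
  qed
  have be: "be \<noteq> 0"
  proof
    assume "be = 0"
    have "u0 = (1/al) *\<^sub>R w1" using w1e \<open>be = 0\<close> al by simp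
    then have "u0 \<in> span {u2, u3}" using w1b by (simp add: span_scale)
    then have "dim (span {u0,u2,u3}) \<le> 2" by (rule dim2_of_mem)
    then show False using n3 by (simp add: insert_commute)
  qed
  have al': "al' \<noteq> 0"
  proof
    assume "al' = 0"
    then have "be' \<noteq> 0" using w2e nz by auto
    have "u2 = (1/be') *\<^sub>R w2" using w2e \<open>al' = 0\<close> \<open>be' \<noteq> 0\<close> by simp
    then have "u2 \<in> span {u1, u3}" using w2b by (simp add: span_scale)
    then have "dim (span {u2,u1,u3}) \<le> 2" by (rule dim2_of_mem)
    then show False using n2 by (simp add: insert_commute)
  qed
  have be': "be' \<noteq> 0"
  proof
    assume "be' = 0"
    have "u0 = (1/al') *\<^sub>R w2" using w2e \<open>be' = 0\<close> al' by simp
    then have "u0 \<in> span {u1, u3}" using w2b by (simp add: span_scale)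
    then have "dim (span {u0,u1,u3}) \<le> 2" by (rule dim2_of_mem)
    then show False using n1 by (simp add: insert_commute)
  qed
  define U where "U = (- al) *\<^sub>R u0"
  define Y1 where "Y1 = w1"
  define Y2 where "Y2 = (al / al') *\<^sub>R w2"
  define ga where "ga = al * be' / al'"
  have UY1: "U + Y1 = be *\<^sub>R u1" unfolding U_def Y1_def w1e by simp
  have UY2: "U + Y2 = ga *\<^sub>R u2" unfolding U_def Y2_def w2e ga_def using al' by (simp add: algebra_simps)
  have V: "U + Y1 + Y2 = al *\<^sub>R u0 + be *\<^sub>R u1 + ga *\<^sub>R u2"
    unfolding U_def Y1_def Y2_def w2e w1e ga_def using al' by (simp add: algebra_simps)
  have ga: "ga \<noteq> 0" unfolding ga_def using al al' be' by simp
  have Va: "U + Y1 + Y2 \<in> span {u2,u3}"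
  proof -
    have m: "Y1 + ga *\<^sub>R u2 \<in> span {u2,u3}" unfolding Y1_def
      using w1b by (intro span_add span_scale) (auto intro: span_base)
    have "U + Y1 + Y2 = Y1 + (U + Y2)" by (simp add: algebra_simps)
    also have "\<dots> = Y1 + ga *\<^sub>R u2" by (simp add: UY2)
    finally have e: "U + Y1 + Y2 = Y1 + ga *\<^sub>R u2" .
    show ?thesis unfolding e by (rule m)
  qed
  have Vb: "U + Y1 + Y2 \<in> span {u1,u3}"
  proof -
    have m: "Y2 + be *\<^sub>R u1 \<in> span {u1,u3}" unfolding Y2_def
      using w2b by (intro span_add span_scale) (auto intro: span_base)
    have "U + Y1 + Y2 = Y2 + (U + Y1)" by (simp add: algebra_simps)
    also have "\<dots> = Y2 + be *\<^sub>R u1" by (simp add: UY1)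
    finally have e: "U + Y1 + Y2 = Y2 + be *\<^sub>R u1" .
    show ?thesis unfolding e by (rule m)
  qed
  obtain s t where st: "U + Y1 + Y2 = s *\<^sub>R u2 + t *\<^sub>R u3" using Va by (rule span2_E)
  obtain s' t' where st': "U + Y1 + Y2 = s' *\<^sub>R u1 + t' *\<^sub>R u3" using Vb by (rule span2_E)
  have "(- s') *\<^sub>R u1 + (t - t') *\<^sub>R u3 + s *\<^sub>R u2 = 0" using st st' by (simp add: algebra_simps)
  then have "s = 0" by (rule indep3(3)[OF n2])
  then have Vm: "U + Y1 + Y2 \<in> ppoint_space x11" using st unfolding mem_line u3_def
    by (simp add: span_scale span_base)
  have Vnz: "U + Y1 + Y2 \<noteq> 0"
  proof
    assume "U + Y1 + Y2 = 0"
    then have "ga *\<^sub>R u2 + al *\<^sub>R u0 + be *\<^sub>R u1 = 0" using V by (simp add: algebra_simps)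
    then have "ga = 0" by (rule indep3(1)[OF n4])
    then show False using ga by simp
  qed
  show ?thesis
  proof (rule that)
    show "U \<in> ppoint_space x00" unfolding U_def u0_def by (rule scale_in_line[OF in_line_rep])
    show "U \<noteq> 0" unfolding U_def using al nz by simp
    show "Y1 \<in> ppoint_space y1" unfolding Y1_def w1_def by (rule in_line_rep)
    show "Y1 \<noteq> 0" unfolding Y1_def using nz by simp
    show "Y2 \<in> ppoint_space y2" unfolding Y2_def w2_def by (rule scale_in_line[OF in_line_rep])
    show "Y2 \<noteq> 0" unfolding Y2_def using nz al al' by simp
    show "U + Y1 \<in> ppoint_space x10" unfolding UY1 u1_def by (rule scale_in_line[OF in_line_rep])
    show "U + Y1 \<noteq> 0" unfolding UY1 using be nz by simp
    show "U + Y2 \<in> ppoint_space x01" unfolding UY2 u2_def by (rule scale_in_line[OF in_line_rep])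
    show "U + Y2 \<noteq> 0" unfolding UY2 using ga nz by simp
    show "U + Y1 + Y2 \<in> ppoint_space x11" by (rule Vm)
    show "U + Y1 + Y2 \<noteq> 0" by (rule Vnz)
  qed
qed

lemma four_nonzero:
  fixes G :: "nat \<Rightarrow> nat \<Rightarrow> real^4"
  assumes "0 < N"
    and bd: "\<And>k l. k \<le> N \<Longrightarrow> l \<le> N \<Longrightarrow> G k l = 0 \<Longrightarrow> k = 0 \<or> k = N \<or> l = 0 \<or> l = N"
    and r: "\<And>k. k \<le> N \<Longrightarrow> \<not> (G k 0 = 0 \<and> G k N = 0)"
    and c: "\<And>l. l \<le> N \<Longrightarrow> \<not> (G 0 l = 0 \<and> G N l = 0)"
    and ij: "i0 \<le> N" "i1 \<le> N" "j0 \<le> N" "j1 \<le> N" "i0 \<noteq> i1" "j0 \<noteq> j1"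
  shows "G i0 j0 \<noteq> 0 \<or> G i0 j1 \<noteq> 0 \<or> G i1 j1 \<noteq> 0 \<or> G i1 j0 \<noteq> 0"
proof (rule ccontr)
  assume "\<not> ?thesis"
  then have z: "G i0 j0 = 0" "G i0 j1 = 0" "G i1 j1 = 0" "G i1 j0 = 0" by auto
  have b1: "i0 = 0 \<or> i0 = N \<or> j0 = 0 \<or> j0 = N" using bd[OF ij(1,3) z(1)] .
  have b2: "i0 = 0 \<or> i0 = N \<or> j1 = 0 \<or> j1 = N" using bd[OF ij(1,4) z(2)] .
  have b3: "i1 = 0 \<or> i1 = N \<or> j1 = 0 \<or> j1 = N" using bd[OF ij(2,4) z(3)] .
  have b4: "i1 = 0 \<or> i1 = N \<or> j0 = 0 \<or> j0 = N" using bd[OF ij(2,3) z(4)] .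
  have rowc: "\<And>i. i \<le> N \<Longrightarrow> {j0, j1} = {0, N} \<Longrightarrow> G i j0 = 0 \<Longrightarrow> G i j1 = 0 \<Longrightarrow> False"
    using r by (metis doubleton_eq_iff)
  have colc: "\<And>j. j \<le> N \<Longrightarrow> {i0, i1} = {0, N} \<Longrightarrow> G i0 j = 0 \<Longrightarrow> G i1 j = 0 \<Longrightarrow> False"
    using c by (metis doubleton_eq_iff)
  show False
  proof (cases "{i0, i1} = {0, N}")
    case True
    show False using colc[OF ij(3) True z(1) z(4)] .
  next
    case ni: False
    show False
    proof (cases "{j0, j1} = {0, N}")
      case True
      show False using rowc[OF ij(1) True z(1) z(2)] .
    next
      case False
      then show False using ni b1 b2 b3 b4 ij by auto
    qed
  qed
qed

lemma in_plane:
  assumes d: "dim (psp {a,b,c}) = 3" and cp: "dim (psp {a,b,c,h}) \<le> 3"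
  shows "rep h \<in> psp {a,b,c}"
proof -
  have "span {rep a, rep b, rep c} = span {rep a, rep b, rep c, rep h}"
    using d cp by (intro dim_eq_span) (auto simp: psp3 psp4)
  then show ?thesis unfolding psp3 by (simp add: span_base)
qed

lemma same_point:
  assumes "rep g \<in> I" "rep f \<in> I" "dim I \<le> 1"
  shows "g = f"
proof (cases "rep g \<in> span {rep f}")
  case True
  then show ?thesis using pt_eq[OF rep(1)[of g] _ in_line_rep[of g], of f] rep(2)[of f] by simp
next
  case False
  have "independent {rep f}" using rep(1)[of f] by (simp add: independent_insert span_empty)
  then have "independent (insert (rep g) {rep f})" by (rule independent_insertI[OF False])
  moreover have "rep g \<noteq> rep f" using False by (auto intro: span_base)
  ultimately have "card {rep g, rep f} \<le> dim I" using assms by (intro independent_card_le_dim) auto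
  then show ?thesis using assms(3) \<open>rep g \<noteq> rep f\<close> by simp
qed

lemma in_psp: "v \<in> ppoint_space x \<Longrightarrow> x \<in> S \<Longrightarrow> v \<in> psp S"
  unfolding psp_def by (auto intro: span_base)

lemma rep_in_psp: assumes "v \<noteq> 0" "v \<in> ppoint_space x" "v \<in> psp S" shows "rep x \<in> psp S"
proof -
  have "rep x \<in> span {v}" using line_eq[OF assms(1,2)] in_line_rep[of x] by simp
  then obtain m where "rep x = m *\<^sub>R v" by (auto simp: span_singleton)
  then show ?thesis using assms(3) unfolding psp_def by (simp add: span_scale)
qed

theorem proposition8p1:
  fixes N :: nat
    and x00 x10 x11 x01 y1 y2 :: rp3
    and p0 p1 q0 q1 :: "nat \<Rightarrow> rp3"
  assumes N2: "N \<ge> 2"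
    and planar: "coplanar4 x00 x10 x11 x01"
    and y1: "on_line y1 x00 x10" "on_line y1 x01 x11"
    and y2: "on_line y2 x00 x01" "on_line y2 x10 x11"
    and ends: "p0 0 = x00" "p0 N = x10" "p1 0 = x01" "p1 N = x11"
              "q0 0 = x00" "q0 N = x01" "q1 0 = x10" "q1 N = x11"
    and pcol: "\<forall>k \<le> N. collinear3 (p0 k) (p1 k) y2"
    and qcol: "\<forall>l \<le> N. collinear3 (q0 l) (q1 l) y1"
    and gp: "gen_pos_data N x00 x10 x11 x01 p0 p1 q0 q1"
  shows "\<exists>f. multi_Q_net N f
            \<and> (\<forall>k \<le> N. f k 0 = p0 k \<and> f k N = p1 k)
            \<and> (\<forall>l \<le> N. f 0 l = q0 l \<and> f N l = q1 l)
            \<and> (\<forall>g. multi_Q_net N g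
                   \<and> (\<forall>k \<le> N. g k 0 = p0 k \<and> g k N = p1 k)
                   \<and> (\<forall>l \<le> N. g 0 l = q0 l \<and> g N l = q1 l)
                   \<longrightarrow> (\<forall>k \<le> N. \<forall>l \<le> N. g k l = f k l))"
proof -
  have nd: "quad_nondegenerate x00 x10 x11 x01" using gp unfolding gen_pos_data_def by simp
  have gpI: "dim (psp {p0 k, x00, q0 l}) = 3 \<and> dim (psp {p1 k, x01, q0 l}) = 3 \<and>
        dim (psp {p0 k, x10, q1 l}) = 3 \<and> dim (psp {p1 k, x11, q1 l}) = 3 \<and>
        dim (psp {p0 k, x00, q0 l} \<inter> psp {p1 k, x01, q0 l} \<inter>
             psp {p0 k, x10, q1 l} \<inter> psp {p1 k, x11, q1 l}) \<le> 1"
    if "0 < k" "k < N" "0 < l" "l < N" for k l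
    using gp that unfolding gen_pos_data_def by blast
  obtain U Y1 Y2 where fr: "U \<in> ppoint_space x00" "U \<noteq> 0" "Y1 \<in> ppoint_space y1" "Y1 \<noteq> 0"
    "Y2 \<in> ppoint_space y2" "Y2 \<noteq> 0" "U + Y1 \<in> ppoint_space x10" "U + Y1 \<noteq> 0"
    "U + Y2 \<in> ppoint_space x01" "U + Y2 \<noteq> 0" "U + Y1 + Y2 \<in> ppoint_space x11" "U + Y1 + Y2 \<noteq> 0"
    using quad_frame[OF nd y1 y2] by blast
  have N0: "0 < N" "N \<noteq> 0" using N2 by auto
  define R0 where "R0 k \<longleftrightarrow> 0 < k \<and> k < N \<and> p0 k = p1 k \<and> p0 k \<noteq> y2" for k
  define C0 where "C0 l \<longleftrightarrow> 0 < l \<and> l < N \<and> q0 l = q1 l \<and> q0 l \<noteq> y1" for l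
  define a where "a k = (if k = 0 then U else if k = N then U + Y1 else if R0 k then rep (p0 k)
      else (SOME a. a \<in> ppoint_space (p0 k) \<and> a + Y2 \<in> ppoint_space (p1 k)))" for k
  define b where "b l = (if l = 0 then 0 else if l = N then Y2 else if C0 l then rep (q0 l)
      else (SOME c. c \<in> ppoint_space (q0 l) \<and> c + Y1 \<in> ppoint_space (q1 l)) - U)" for l
  define t where "t k = (if R0 k then 0 else (1::real))" for k
  define r where "r l = (if C0 l then 0 else (1::real))" for l
  define F where "F k l = r l *\<^sub>R a k + t k *\<^sub>R b l" for k l
  define f where "f k l = (if l = 0 then p0 k else if l = N then p1 k else if k = 0 then q0 l
      else if k = N then q1 l else pt (F k l))" for k l
  have R0a: "R0 k \<Longrightarrow> a k = rep (p0 k)" for k unfolding a_def R0_def by auto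
  have C0b: "C0 l \<Longrightarrow> b l = rep (q0 l)" for l unfolding b_def C0_def by auto
  have a0: "a 0 = U" and aN: "a N = U + Y1" using N0 unfolding a_def by auto
  have b0: "b 0 = 0" and bN: "b N = Y2" using N0 unfolding b_def by auto
  have t0: "t 0 = 1" "t N = 1" and r0: "r 0 = 1" "r N = 1" unfolding t_def r_def R0_def C0_def by auto
  have A1: "a k \<in> ppoint_space (p0 k) \<and> (\<not> R0 k \<longrightarrow> a k + Y2 \<in> ppoint_space (p1 k))" if k: "k \<le> N" for k
  proof (cases "k = 0 \<or> k = N")
    case True
    then show ?thesis using fr ends a0 aN unfolding R0_def by (auto simp: add.assoc add.commute add.left_commute)
  next
    case False
    show ?thesis
    proof (cases "R0 k")
      case True
      then show ?thesis using R0a in_line_rep by simp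
    next
      case nR: False
      have ex: "\<exists>a. a \<in> ppoint_space (p0 k) \<and> a + Y2 \<in> ppoint_space (p1 k)"
        by (rule exist_a[OF pcol[rule_format, OF k] fr(5,6)]) (use nR False k in \<open>auto simp: R0_def\<close>)
      have "a k = (SOME a. a \<in> ppoint_space (p0 k) \<and> a + Y2 \<in> ppoint_space (p1 k))"
        using False nR unfolding a_def by simp
      then show ?thesis using someI_ex[OF ex] nR by simp
    qed
  qed
  have A2: "(\<not> C0 l \<longrightarrow> U + b l \<in> ppoint_space (q0 l) \<and> U + Y1 + b l \<in> ppoint_space (q1 l))" if l: "l \<le> N" for l
  proof (cases "l = 0 \<or> l = N")
    case True
    then show ?thesis using fr ends b0 bN unfolding C0_def by (auto simp: add.assoc add.commute add.left_commute)
  next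
    case False
    show ?thesis
    proof (cases "C0 l")
      case True
      then show ?thesis by simp
    next
      case nC: False
      have ex: "\<exists>c. c \<in> ppoint_space (q0 l) \<and> c + Y1 \<in> ppoint_space (q1 l)"
        by (rule exist_a[OF qcol[rule_format, OF l] fr(3,4)]) (use nC False l in \<open>auto simp: C0_def\<close>)
      define c where "c = (SOME c. c \<in> ppoint_space (q0 l) \<and> c + Y1 \<in> ppoint_space (q1 l))"
      have "b l = c - U" using False nC unfolding b_def c_def by simp
      then have e: "U + b l = c" "U + Y1 + b l = c + Y1" by (simp_all add: algebra_simps)
      show ?thesis unfolding e using someI_ex[OF ex, folded c_def] nC by simp
    qed
  qed
  have G1: False if "R0 k" "C0 l" for k l
  proof -
    have kl: "0 < k" "k < N" "0 < l" "l < N" and P: "p1 k = p0 k" and Q: "q1 l = q0 l"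
      using that unfolding R0_def C0_def by auto
    note g = gpI[OF kl, unfolded P Q]
    show False
    proof (cases "p0 k = q0 l")
      case True
      have "rep (p0 k) \<in> span {rep x00, rep (p0 k)}" by (auto intro: span_base)
      then have "dim (span {rep (p0 k), rep x00, rep (p0 k)}) \<le> 2" by (rule dim2_of_mem)
      then show False using g True by (simp add: psp3)
    next
      case False
      let ?I = "psp {p0 k, x00, q0 l} \<inter> psp {p0 k, x01, q0 l} \<inter> psp {p0 k, x10, q0 l} \<inter> psp {p0 k, x11, q0 l}"
      have "rep (p0 k) \<in> ?I" "rep (q0 l) \<in> ?I" by (auto intro!: in_psp in_line_rep)
      then have "p0 k = q0 l" using g by (intro same_point[of _ ?I]) auto
      then show False using False by simp
    qed
  qed
  have A5: "F k l \<noteq> 0" if kl: "0 < k" "k < N" "0 < l" "l < N" for k l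
  proof (cases "R0 k")
    case True
    then have "\<not> C0 l" using G1 by blast
    then show ?thesis using True R0a rep(1) unfolding F_def t_def r_def by simp
  next
    case nR: False
    show ?thesis
    proof (cases "C0 l")
      case True
      then show ?thesis using nR C0b rep(1) unfolding F_def t_def r_def by simp
    next
      case nC: False
      show ?thesis
      proof
        assume z: "F k l = 0"
        then have ab: "a k + b l = 0" using nR nC unfolding F_def t_def r_def by simp
        have m1: "a k \<in> psp {p0 k, q0 l}" using A1[of k] kl by (auto intro: in_psp)
        have m2: "U + b l \<in> psp {p0 k, q0 l}" using A2[of l] kl nC by (auto intro: in_psp)
        have "U = (U + b l) + a k" using ab by (simp add: algebra_simps eq_neg_iff_add_eq_0)
        then have "U \<in> psp {p0 k, q0 l}" using m1 m2 unfolding psp_def by (metis span_add)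
        then have "rep x00 \<in> psp {p0 k, q0 l}" by (rule rep_in_psp[OF fr(2,1)])
        then have "dim (span {rep x00, rep (p0 k), rep (q0 l)}) \<le> 2"
          unfolding psp_rep by (intro dim2_of_mem) simp
        then show False using gpI[OF kl] by (simp add: psp3 insert_commute)
      qed
    qed
  qed
  have Fk0: "F k 0 = a k" and FkN: "F k N = a k + t k *\<^sub>R Y2" for k
    unfolding F_def using r0 b0 bN by simp_all
  have F0l: "F 0 l = r l *\<^sub>R U + b l" and FNl: "F N l = r l *\<^sub>R (U + Y1) + b l" for l
    unfolding F_def using t0 a0 aN by simp_all
  have Z1: "\<not> (F k 0 = 0 \<and> F k N = 0)" for k
  proof
    assume z: "F k 0 = 0 \<and> F k N = 0"
    then have ak: "a k = 0" using Fk0 by simp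
    then have "\<not> R0 k" using R0a rep(1) by metis
    then show False using z ak FkN fr(6) unfolding t_def by simp
  qed
  have Z2: "\<not> (F 0 l = 0 \<and> F N l = 0)" for l
  proof
    assume z: "F 0 l = 0 \<and> F N l = 0"
    have "F N l - F 0 l = r l *\<^sub>R Y1" unfolding F0l FNl by (simp add: algebra_simps)
    then have "r l *\<^sub>R Y1 = 0" using z by simp
    then have "r l = 0" using fr(4) by simp
    then have "C0 l" unfolding r_def by (cases "C0 l") auto
    then show False using z F0l C0b rep(1) \<open>r l = 0\<close> by simp
  qed
  have Zb: "k = 0 \<or> k = N \<or> l = 0 \<or> l = N" if "k \<le> N" "l \<le> N" "F k l = 0" for k l
    using A5[of k l] that by linarith
  have A3: "F k l \<in> ppoint_space (f k l)" if kl: "k \<le> N" "l \<le> N" for k l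
  proof -
    consider "l = 0" | "l = N" "l \<noteq> 0" | "k = 0" "l \<noteq> 0" "l \<noteq> N" | "k = N" "k \<noteq> 0" "l \<noteq> 0" "l \<noteq> N"
      | "0 < k" "k < N" "0 < l" "l < N" using kl by linarith
    then show ?thesis
    proof cases
      case 1
      then show ?thesis unfolding f_def using Fk0 A1[OF kl(1)] by simp
    next
      case 2
      show ?thesis
      proof (cases "R0 k")
        case True
        then have "F k l = rep (p0 k)" "p1 k = p0 k" using 2 FkN R0a unfolding t_def R0_def by auto
        then show ?thesis unfolding f_def using 2 in_line_rep by simp
      next
        case False
        then show ?thesis unfolding f_def using 2 FkN A1[OF kl(1)] unfolding t_def by simp
      qed
    next
      case 3
      show ?thesis
      proof (cases "C0 l")
        case True
        then show ?thesis unfolding f_def using 3 F0l C0b in_line_rep unfolding r_def by simp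
      next
        case False
        then show ?thesis unfolding f_def using 3 F0l A2[OF kl(2)] unfolding r_def by simp
      qed
    next
      case 4
      show ?thesis
      proof (cases "C0 l")
        case True
        then have "q1 l = q0 l" unfolding C0_def by simp
        then show ?thesis unfolding f_def using 4 FNl C0b True in_line_rep unfolding r_def by simp
      next
        case False
        then show ?thesis unfolding f_def using 4 FNl A2[OF kl(2)] unfolding r_def
          by (simp add: algebra_simps)
      qed
    next
      case 5
      then have "F k l \<noteq> 0" by (rule A5)
      then show ?thesis unfolding f_def using 5 pt by (simp add: span_base)
    qed
  qed
  have A7: "f k l = p0 k" if "R0 k" "l \<le> N" for k l
  proof -
    have k: "0 < k" "k < N" "p1 k = p0 k" using that(1) unfolding R0_def by auto
    have "\<not> C0 l" using G1 that(1) by blast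
    then have "F k l = rep (p0 k)" unfolding F_def r_def t_def using that(1) R0a by simp
    then show ?thesis unfolding f_def using k pt_rep by simp
  qed
  have A8: "f k l = q0 l" if "C0 l" "k \<le> N" for k l
  proof -
    have l: "0 < l" "l < N" "q1 l = q0 l" using that(1) unfolding C0_def by auto
    have "\<not> R0 k" using G1 that(1) by blast
    then have "F k l = rep (q0 l)" unfolding F_def r_def t_def using that(1) C0b by simp
    then show ?thesis unfolding f_def using l pt_rep that(2) by auto
  qed
  have net: "multi_Q_net N f"
    unfolding multi_Q_net_def
  proof (intro allI impI, elim conjE)
    fix i0 i1 j0 j1
    assume ij: "i0 \<le> N" "i1 \<le> N" "j0 \<le> N" "j1 \<le> N" "i0 \<noteq> i1" "j0 \<noteq> j1"
    define c1 where "c1 = r j1 * t i1"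
    define c2 where "c2 = - (r j0 * t i1)"
    define c3 where "c3 = r j0 * t i0"
    define c4 where "c4 = - (r j1 * t i0)"
    have rel: "c1 *\<^sub>R F i0 j0 + c2 *\<^sub>R F i0 j1 + c3 *\<^sub>R F i1 j1 + c4 *\<^sub>R F i1 j0 = 0"
      unfolding c1_def c2_def c3_def c4_def F_def by (simp add: algebra_simps)
    note mem = A3[OF ij(1,3)] A3[OF ij(1,4)] A3[OF ij(2,4)] A3[OF ij(2,3)]
    show "coplanar4 (f i0 j0) (f i0 j1) (f i1 j1) (f i1 j0)"
    proof (cases "R0 i0 \<and> R0 i1")
      case True
      then show ?thesis using A7 ij by (intro coplanar_triv12) auto
    next
      case nRR: False
      show ?thesis
      proof (cases "C0 j0 \<and> C0 j1")
        case True
        then show ?thesis using A8 ij by (intro coplanar_triv14) auto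
      next
        case nCC: False
        have "c1 *\<^sub>R F i0 j0 \<noteq> 0 \<or> c2 *\<^sub>R F i0 j1 \<noteq> 0 \<or> c3 *\<^sub>R F i1 j1 \<noteq> 0 \<or> c4 *\<^sub>R F i1 j0 \<noteq> 0"
        proof (cases "R0 i0 \<or> R0 i1")
          case True
          then have nC: "\<not> C0 j0" "\<not> C0 j1" using G1 by blast+
          show ?thesis
          proof (cases "R0 i0")
            case True
            then have "\<not> R0 i1" using nRR by simp
            then have "c1 = 1" "F i0 j0 = rep (p0 i0)" using True nC R0a
              unfolding c1_def F_def r_def t_def by simp_all
            then show ?thesis using rep(1) by simp
          next
            case False
            then have "R0 i1" using \<open>R0 i0 \<or> R0 i1\<close> by simp
            then have "c3 = 1" "F i1 j1 = rep (p0 i1)" using False nC R0a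
              unfolding c3_def F_def r_def t_def by simp_all
            then show ?thesis using rep(1) by simp
          qed
        next
          case False
          then have nR: "\<not> R0 i0" "\<not> R0 i1" by simp_all
          show ?thesis
          proof (cases "C0 j0")
            case True
            then have "\<not> C0 j1" using nCC by simp
            then have "c1 = 1" "F i0 j0 = rep (q0 j0)" using True nR C0b
              unfolding c1_def F_def r_def t_def by simp_all
            then show ?thesis using rep(1) by simp
          next
            case nC0: False
            show ?thesis
            proof (cases "C0 j1")
              case True
              then have "c2 = -1" "F i0 j1 = rep (q0 j1)" using True nR nC0 C0b
                unfolding c2_def F_def r_def t_def by simp_all
              then show ?thesis using rep(1) by simp
            next
              case False
              then have "c1 = 1" "c2 = -1" "c3 = 1" "c4 = -1" using nR nC0
                unfolding c1_def c2_def c3_def c4_def r_def t_def by simp_all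
              moreover have "F i0 j0 \<noteq> 0 \<or> F i0 j1 \<noteq> 0 \<or> F i1 j1 \<noteq> 0 \<or> F i1 j0 \<noteq> 0"
                by (rule four_nonzero[OF N0(1) Zb]) (use Z1 Z2 ij in auto)
              ultimately show ?thesis by auto
            qed
          qed
        qed
        then show ?thesis by (rule coplanar_rel[OF mem rel])
      qed
    qed
  qed
  have bdr: "(\<forall>k \<le> N. f k 0 = p0 k \<and> f k N = p1 k)" "(\<forall>l \<le> N. f 0 l = q0 l \<and> f N l = q1 l)"
    unfolding f_def using N0 ends by auto
  have inI: "rep (h k l) \<in> psp {p0 k, x00, q0 l} \<inter> psp {p1 k, x01, q0 l} \<inter>
             psp {p0 k, x10, q1 l} \<inter> psp {p1 k, x11, q1 l}"
    if h: "multi_Q_net N h" "\<forall>k \<le> N. h k 0 = p0 k \<and> h k N = p1 k" "\<forall>l \<le> N. h 0 l = q0 l \<and> h N l = q1 l"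
      and kl: "0 < k" "k < N" "0 < l" "l < N" for h k l
  proof -
    note g = gpI[OF kl]
    have hq: "\<And>i0 i1 j0 j1. i0 \<le> N \<Longrightarrow> i1 \<le> N \<Longrightarrow> j0 \<le> N \<Longrightarrow> j1 \<le> N \<Longrightarrow> i0 \<noteq> i1 \<Longrightarrow> j0 \<noteq> j1 \<Longrightarrow>
        dim (psp {h i0 j0, h i0 j1, h i1 j1, h i1 j0}) \<le> 3"
      using h(1) unfolding multi_Q_net_def coplanar4_def by blast
    have hb: "h k 0 = p0 k" "h k N = p1 k" "h 0 l = q0 l" "h N l = q1 l" "h 0 0 = x00" "h 0 N = x01"
      "h N 0 = x10" "h N N = x11" using h(2,3) kl ends by auto
    have c1: "dim (psp {p0 k, x00, q0 l, h k l}) \<le> 3"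
      using hq[of k 0 0 l] kl hb by (simp add: insert_commute)
    have c2: "dim (psp {p1 k, x01, q0 l, h k l}) \<le> 3"
      using hq[of k 0 N l] kl hb by (simp add: insert_commute)
    have c3: "dim (psp {p0 k, x10, q1 l, h k l}) \<le> 3"
      using hq[of k N 0 l] kl hb by (simp add: insert_commute)
    have c4: "dim (psp {p1 k, x11, q1 l, h k l}) \<le> 3"
      using hq[of k N N l] kl hb by (simp add: insert_commute)
    show ?thesis using in_plane[OF _ c1] in_plane[OF _ c2] in_plane[OF _ c3] in_plane[OF _ c4] g by simp
  qed
  have uniq: "\<forall>g. multi_Q_net N g
                   \<and> (\<forall>k \<le> N. g k 0 = p0 k \<and> g k N = p1 k)
                   \<and> (\<forall>l \<le> N. g 0 l = q0 l \<and> g N l = q1 l)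
                   \<longrightarrow> (\<forall>k \<le> N. \<forall>l \<le> N. g k l = f k l)"
  proof (intro allI impI, elim conjE)
    fix g k l
    assume gh: "multi_Q_net N g" "\<forall>k \<le> N. g k 0 = p0 k \<and> g k N = p1 k" "\<forall>l \<le> N. g 0 l = q0 l \<and> g N l = q1 l"
      and kl: "k \<le> N" "l \<le> N"
    show "g k l = f k l"
    proof (cases "0 < k \<and> k < N \<and> 0 < l \<and> l < N")
      case True
      then have "0 < k" "k < N" "0 < l" "l < N" by auto
      note I1 = inI[OF gh this] and I2 = inI[OF net bdr this]
      show ?thesis by (rule same_point[OF I1 I2]) (use gpI[OF \<open>0 < k\<close> \<open>k < N\<close> \<open>0 < l\<close> \<open>l < N\<close>] in simp)
    next
      case False
      then have "k = 0 \<or> k = N \<or> l = 0 \<or> l = N" using kl by linarith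
      then show ?thesis using gh bdr kl by auto
    qed
  qed
  show ?thesis using net bdr uniq by blast
qed

end
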